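(* Let $A$ be a group and $H$ a subgroup of $A$ such that there exists an $H$-filtration of $A$. Let $B$ be an ERF group, $K$ a central subgroup of $B$, and $\phi: H \to K$ an isomorphism. Then there exist an $H$-filtration of $A$ and a $K$-filtration of $B$ which are $(H, K, \phi)$-compatible.
   Context: A filtration of a group $A$ is a family $\{A_\lambda\}_{\lambda\in\Lambda}$ of normal subgroups of finite index with $\bigcap A_\lambda=\{e\}$; for a subgroup $H$, it is an $H$-filtration if $\bigcap_\lambda HA_\lambda = H$. Given a $K$-filtration $\{B_\lambda\}_{\lambda\in\Lambda}$ of $B$ indexed by the same set, the two filtrations are $(H,K,\phi)$-compatible if for each $\lambda$ the map $hA_\lambda\mapsto\phi(h)B_\lambda$ is well defined and is an isomorphism $HA_\lambda/A_\lambda\to KB_\lambda/B_\lambda$. A subgroup is profinitely closed if it equals the intersection of all finite-index subgroups containing it; a group is ERF (extended residually finite) if all its subgroups are profinitely closed. *)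

theory Defs
  imports "HOL-Algebra.Algebra"
begin

definition filtration :: "('a, 'm) monoid_scheme \<Rightarrow> 'i set \<Rightarrow> ('i \<Rightarrow> 'a set) \<Rightarrow> bool" where
  "filtration A I N \<longleftrightarrow>
     (\<forall>i\<in>I. N i \<lhd> A \<and> finite (rcosets\<^bsub>A\<^esub> (N i))) \<and>
     carrier A \<inter> (\<Inter>i\<in>I. N i) = {\<one>\<^bsub>A\<^esub>}"

definition H_filtration :: "('a, 'm) monoid_scheme \<Rightarrow> 'a set \<Rightarrow> 'i set \<Rightarrow> ('i \<Rightarrow> 'a set) \<Rightarrow> bool" where
  "H_filtration A H I N \<longleftrightarrow>
     filtration A I N \<and> carrier A \<inter> (\<Inter>i\<in>I. H <#>\<^bsub>A\<^esub> N i) = H"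

definition induced_map ::
  "('a, 'm) monoid_scheme \<Rightarrow> ('b, 'n) monoid_scheme \<Rightarrow> 'a set \<Rightarrow> ('a \<Rightarrow> 'b) \<Rightarrow> 'a set \<Rightarrow> 'b set
     \<Rightarrow> 'a set \<Rightarrow> 'b set" where
  "induced_map A B H \<phi> N M C = (SOME D. \<exists>h\<in>H. C = N #>\<^bsub>A\<^esub> h \<and> D = M #>\<^bsub>B\<^esub> \<phi> h)"

definition compatible ::
  "('a, 'm) monoid_scheme \<Rightarrow> ('b, 'n) monoid_scheme \<Rightarrow> 'a set \<Rightarrow> 'b set \<Rightarrow> ('a \<Rightarrow> 'b)
     \<Rightarrow> 'i set \<Rightarrow> ('i \<Rightarrow> 'a set) \<Rightarrow> ('i \<Rightarrow> 'b set) \<Rightarrow> bool" where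
  "compatible A B H K \<phi> I N M \<longleftrightarrow>
     (\<forall>i\<in>I.
        (\<forall>h\<in>H. \<forall>h'\<in>H. N i #>\<^bsub>A\<^esub> h = N i #>\<^bsub>A\<^esub> h' \<longrightarrow> M i #>\<^bsub>B\<^esub> \<phi> h = M i #>\<^bsub>B\<^esub> \<phi> h') \<and>
        induced_map A B H \<phi> (N i) (M i)
          \<in> iso ((A\<lparr>carrier := H <#>\<^bsub>A\<^esub> N i\<rparr>) Mod (N i))
                ((B\<lparr>carrier := K <#>\<^bsub>B\<^esub> M i\<rparr>) Mod (M i)))"

definition profinitely_closed :: "('a, 'm) monoid_scheme \<Rightarrow> 'a set \<Rightarrow> bool" where
  "profinitely_closed G S \<longleftrightarrow>
     S = carrier G \<inter> \<Inter>{F. subgroup F G \<and> S \<subseteq> F \<and> finite (rcosets\<^bsub>G\<^esub> F)}"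

definition ERF :: "('a, 'm) monoid_scheme \<Rightarrow> bool" where
  "ERF G \<longleftrightarrow> (\<forall>S. subgroup S G \<longrightarrow> profinitely_closed G S)"

definition central_subgroup :: "'a set \<Rightarrow> ('a, 'm) monoid_scheme \<Rightarrow> bool" where
  "central_subgroup K G \<longleftrightarrow> subgroup K G \<and>
     (\<forall>k\<in>K. \<forall>g\<in>carrier G. k \<otimes>\<^bsub>G\<^esub> g = g \<otimes>\<^bsub>G\<^esub> k)"

end

theory Submission
  imports Defs
begin


lemma finite_image_factor:
  assumes "finite (g ` Xs)" and "\<And>x y. x \<in> Xs \<Longrightarrow> y \<in> Xs \<Longrightarrow> g x = g y \<Longrightarrow> f x = f y"
  shows "finite (f ` Xs)"
proof -
  define r where "r c = (SOME x. x \<in> Xs \<and> g x = c)" for c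
  have r: "r (g x) \<in> Xs \<and> g (r (g x)) = g x" if "x \<in> Xs" for x
    unfolding r_def by (rule someI[where x=x]) (simp add: that)
  have "f ` Xs \<subseteq> (\<lambda>c. f (r c)) ` (g ` Xs)"
  proof
    fix y assume "y \<in> f ` Xs"
    then obtain x where x: "x \<in> Xs" and y: "y = f x" by (rule imageE)
    have "f x = f (r (g x))" using assms(2)[of x "r (g x)"] r[OF x] x by simp
    then have "y = (\<lambda>c. f (r c)) (g x)" using y by simp
    moreover have "g x \<in> g ` Xs" using x by (rule imageI)
    ultimately show "y \<in> (\<lambda>c. f (r c)) ` (g ` Xs)" by (rule image_eqI)
  qed
  moreover have "finite ((\<lambda>c. f (r c)) ` (g ` Xs))" using assms(1) by (rule finite_imageI)
  ultimately show ?thesis by (rule finite_subset)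
qed

context group begin

lemma cancel1: "x \<in> carrier G \<Longrightarrow> y \<in> carrier G \<Longrightarrow> inv x \<otimes> (x \<otimes> y) = y"
  by (simp add: m_assoc[symmetric])
lemma cancel2: "x \<in> carrier G \<Longrightarrow> y \<in> carrier G \<Longrightarrow> x \<otimes> (inv x \<otimes> y) = y"
  by (simp add: m_assoc[symmetric])

lemma core_exists:
  assumes S: "finite S" "\<And>F. F \<in> S \<Longrightarrow> subgroup F G \<and> finite (rcosets F)"
  shows "\<exists>M. M \<lhd> G \<and> finite (rcosets M) \<and> (\<forall>F\<in>S. M \<subseteq> F) \<and>
     (\<forall>Z. (\<forall>F\<in>S. Z \<subseteq> F) \<longrightarrow> Z \<subseteq> carrier G \<longrightarrow>
          (\<forall>z\<in>Z. \<forall>x\<in>carrier G. x \<otimes> z \<otimes> inv x \<in> Z) \<longrightarrow> Z \<subseteq> M)"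
proof -
  define M where "M = {g \<in> carrier G. \<forall>F\<in>S. \<forall>x\<in>carrier G. x \<otimes> g \<otimes> inv x \<in> F}"
  have sg: "subgroup M G"
  proof (rule subgroupI)
    show "M \<subseteq> carrier G" by (auto simp: M_def)
    show "M \<noteq> {}"
    proof -
      have "\<forall>F\<in>S. \<one> \<in> F" using S(2) by (simp add: subgroup.one_closed)
      then have "\<one> \<in> M" by (simp add: M_def)
      then show ?thesis by blast
    qed
  next
    fix g assume g: "g \<in> M"
    show "inv g \<in> M" unfolding M_def
    proof (intro CollectI conjI ballI)
      show "inv g \<in> carrier G" using g by (simp add: M_def)
      fix F x assume F: "F \<in> S" and x: "x \<in> carrier G"
      have gc: "g \<in> carrier G" using g by (simp add: M_def)
      have "x \<otimes> g \<otimes> inv x \<in> F" using g F x by (simp add: M_def)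
      then have "inv (x \<otimes> g \<otimes> inv x) \<in> F"
        by (rule subgroup.m_inv_closed[OF conjunct1[OF S(2)[OF F]]])
      also have "inv (x \<otimes> g \<otimes> inv x) = x \<otimes> inv g \<otimes> inv x"
        using gc x by (simp add: inv_mult_group m_assoc)
      finally show "x \<otimes> inv g \<otimes> inv x \<in> F" .
    qed
  next
    fix g h assume g: "g \<in> M" and h: "h \<in> M"
    have gc: "g \<in> carrier G" and hc: "h \<in> carrier G" using g h by (simp_all add: M_def)
    show "g \<otimes> h \<in> M" unfolding M_def
    proof (intro CollectI conjI ballI)
      show "g \<otimes> h \<in> carrier G" using gc hc by simp
      fix F x assume F: "F \<in> S" and x: "x \<in> carrier G"
      have 1: "x \<otimes> g \<otimes> inv x \<in> F" "x \<otimes> h \<otimes> inv x \<in> F" using g h F x by (simp_all add: M_def)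
      have "(x \<otimes> g \<otimes> inv x) \<otimes> (x \<otimes> h \<otimes> inv x) \<in> F"
        by (rule subgroup.m_closed[OF conjunct1[OF S(2)[OF F]] 1(1) 1(2)])
      also have "(x \<otimes> g \<otimes> inv x) \<otimes> (x \<otimes> h \<otimes> inv x) = x \<otimes> (g \<otimes> h) \<otimes> inv x"
        using gc hc x by (simp add: m_assoc cancel1 cancel2)
      finally show "x \<otimes> (g \<otimes> h) \<otimes> inv x \<in> F" .
    qed
  qed
  have nrm: "M \<lhd> G"
    unfolding normal_inv_iff
  proof (intro conjI ballI sg)
    fix y g assume y: "y \<in> carrier G" and g: "g \<in> M"
    have gc: "g \<in> carrier G" using g by (simp add: M_def)
    show "y \<otimes> g \<otimes> inv y \<in> M" unfolding M_def
    proof (intro CollectI conjI ballI)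
      show "y \<otimes> g \<otimes> inv y \<in> carrier G" using y gc by simp
      fix F x assume F: "F \<in> S" and x: "x \<in> carrier G"
      have xy: "x \<otimes> y \<in> carrier G" using x y by simp
      have "(x \<otimes> y) \<otimes> g \<otimes> inv (x \<otimes> y) \<in> F"
        using g F xy by (simp add: M_def)
      also have "(x \<otimes> y) \<otimes> g \<otimes> inv (x \<otimes> y) = x \<otimes> (y \<otimes> g \<otimes> inv y) \<otimes> inv x"
        using gc y x by (simp add: m_assoc inv_mult_group)
      finally show "x \<otimes> (y \<otimes> g \<otimes> inv y) \<otimes> inv x \<in> F" .
    qed
  qed
  define U where "U = (\<Union>F\<in>S. rcosets F)"
  have finU: "finite U" unfolding U_def using S by auto
  define gm where "gm = (\<lambda>y. restrict (\<lambda>C. C #> y) U)"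
  have "gm ` carrier G \<subseteq> PiE U (\<lambda>_. U)"
  proof
    fix f assume "f \<in> gm ` carrier G"
    then obtain y where y: "y \<in> carrier G" "f = gm y" by blast
    have "C #> y \<in> U" if "C \<in> U" for C
    proof -
      obtain F x where F: "F \<in> S" and x: "x \<in> carrier G" and C: "C = F #> x"
        using \<open>C \<in> U\<close> unfolding U_def RCOSETS_def by blast
      have "C #> y = F #> (x \<otimes> y)" using C x y F S(2)[OF F]
        by (simp add: coset_mult_assoc subgroup.subset)
      then show ?thesis unfolding U_def RCOSETS_def using F x y by auto
    qed
    then show "f \<in> PiE U (\<lambda>_. U)" using y unfolding gm_def by auto
  qed
  then have fin1: "finite (gm ` carrier G)"
    using finite_PiE[OF finU, of "\<lambda>_. U"] finU by (meson finite_subset)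
  have "finite ((\<lambda>y. M #> y) ` carrier G)"
  proof (rule finite_image_factor[OF fin1])
    fix y y' assume y: "y \<in> carrier G" and y': "y' \<in> carrier G" and eq: "gm y = gm y'"
    have "y \<otimes> inv y' \<in> M" unfolding M_def
    proof (intro CollectI conjI ballI)
      show "y \<otimes> inv y' \<in> carrier G" using y y' by simp
      fix F x assume F: "F \<in> S" and x: "x \<in> carrier G"
      have sF: "subgroup F G" using S(2)[OF F] by simp
      have "F #> x \<in> U" unfolding U_def RCOSETS_def using F x by auto
      then have "F #> x #> y = F #> x #> y'" using eq unfolding gm_def
        by (metis restrict_apply')
      then have "F #> (x \<otimes> y) = F #> (x \<otimes> y')"
        using x y y' sF by (simp add: coset_mult_assoc subgroup.subset)
      moreover have "x \<otimes> y \<in> F #> (x \<otimes> y)"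
        using x y sF by (simp add: rcos_self)
      ultimately have "x \<otimes> y \<in> F #> (x \<otimes> y')" by simp
      then have "(x \<otimes> y) \<otimes> inv (x \<otimes> y') \<in> F"
        using x y' sF by (simp add: subgroup.rcos_module_imp is_group)
      also have "(x \<otimes> y) \<otimes> inv (x \<otimes> y') = x \<otimes> (y \<otimes> inv y') \<otimes> inv x"
        using x y y' by (simp add: m_assoc inv_mult_group)
      finally show "x \<otimes> (y \<otimes> inv y') \<otimes> inv x \<in> F" .
    qed
    then have "(y \<otimes> inv y') \<otimes> y' \<in> M #> y'" using y y' sg
      by (simp add: rcosI subgroup.subset)
    then have "y \<in> M #> y'" using y y' by (simp add: m_assoc)
    then show "M #> y = M #> y'" using repr_independence[OF _ y' sg] by simp
  qed
  moreover have "rcosets M = (\<lambda>y. M #> y) ` carrier G" unfolding RCOSETS_def by auto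
  ultimately have finM: "finite (rcosets M)" by simp
  have sub: "\<forall>F\<in>S. M \<subseteq> F"
  proof (intro ballI subsetI)
    fix F g assume "F \<in> S" "g \<in> M"
    then have gc: "g \<in> carrier G" and "\<forall>x\<in>carrier G. x \<otimes> g \<otimes> inv x \<in> F" unfolding M_def by simp_all
    then have "\<one> \<otimes> g \<otimes> inv \<one> \<in> F" using one_closed by (intro bspec[of _ _ \<one>])
    then show "g \<in> F" using gc by simp
  qed
  have Zc: "\<forall>Z. (\<forall>F\<in>S. Z \<subseteq> F) \<longrightarrow> Z \<subseteq> carrier G \<longrightarrow>
          (\<forall>z\<in>Z. \<forall>x\<in>carrier G. x \<otimes> z \<otimes> inv x \<in> Z) \<longrightarrow> Z \<subseteq> M"
  proof (intro allI impI subsetI)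
    fix Z z assume a1: "\<forall>F\<in>S. Z \<subseteq> F" and a2: "Z \<subseteq> carrier G"
      and a3: "\<forall>z\<in>Z. \<forall>x\<in>carrier G. x \<otimes> z \<otimes> inv x \<in> Z" and z: "z \<in> Z"
    have "\<forall>F\<in>S. \<forall>x\<in>carrier G. x \<otimes> z \<otimes> inv x \<in> F"
    proof (intro ballI)
      fix F x assume "F \<in> S" "x \<in> carrier G"
      then have "x \<otimes> z \<otimes> inv x \<in> Z" "Z \<subseteq> F" using a1 a3 z by simp_all
      then show "x \<otimes> z \<otimes> inv x \<in> F" by (rule subsetD[rotated])
    qed
    then show "z \<in> M" using a2 z by (simp add: M_def subsetD)
  qed
  show ?thesis
    using nrm finM sub Zc by (intro exI[of _ M] conjI) assumption+
qed

lemma subgroup_mult_sub: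
  assumes "subgroup F G" "K \<subseteq> F" "M \<subseteq> F"
  shows "K <#> M \<subseteq> F"
proof
  fix y assume "y \<in> K <#> M"
  then obtain k m where "k \<in> K" "m \<in> M" "y = k \<otimes> m" unfolding set_mult_def by blast
  then have "k \<in> F" "m \<in> F" "y = k \<otimes> m" using assms(2,3) by auto
  then show "y \<in> F" using subgroup.m_closed[OF assms(1)] by simp
qed

end



locale setting = A: group A + B: group B
  for A :: "('a, 'm) monoid_scheme" and B :: "('b, 'n) monoid_scheme" +
  fixes H :: "'a set" and K :: "'b set" and \<phi> :: "'a \<Rightarrow> 'b"
  assumes H: "subgroup H A" and K: "subgroup K B"
  and central: "\<And>k g. k \<in> K \<Longrightarrow> g \<in> carrier B \<Longrightarrow> k \<otimes>\<^bsub>B\<^esub> g = g \<otimes>\<^bsub>B\<^esub> k"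
  and iso: "\<phi> \<in> iso (A\<lparr>carrier := H\<rparr>) (B\<lparr>carrier := K\<rparr>)"
begin

lemma Hc: "h \<in> H \<Longrightarrow> h \<in> carrier A" using subgroup.subset[OF H] by auto
lemma Kc: "k \<in> K \<Longrightarrow> k \<in> carrier B" using subgroup.subset[OF K] by auto

lemma phi_K: "h \<in> H \<Longrightarrow> \<phi> h \<in> K"
  using iso unfolding iso_def hom_def by (auto simp: Pi_def)

lemma phi_mult: "h \<in> H \<Longrightarrow> h' \<in> H \<Longrightarrow> \<phi> (h \<otimes>\<^bsub>A\<^esub> h') = \<phi> h \<otimes>\<^bsub>B\<^esub> \<phi> h'"
  using iso unfolding iso_def hom_def by simp

lemma phi_inj: "inj_on \<phi> H"
  using iso unfolding iso_def bij_betw_def by simp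

lemma phi_surj: "\<phi> ` H = K"
  using iso unfolding iso_def bij_betw_def by simp

lemma phi_one: "\<phi> \<one>\<^bsub>A\<^esub> = \<one>\<^bsub>B\<^esub>"
proof -
  have o: "\<one>\<^bsub>A\<^esub> \<in> H" by (rule subgroup.one_closed[OF H])
  have "\<phi> \<one>\<^bsub>A\<^esub> \<otimes>\<^bsub>B\<^esub> \<phi> \<one>\<^bsub>A\<^esub> = \<phi> \<one>\<^bsub>A\<^esub>"
    using phi_mult[OF o o] by simp
  then show ?thesis using Kc[OF phi_K[OF o]] by simp
qed

lemma phi_inv: "h \<in> H \<Longrightarrow> \<phi> (inv\<^bsub>A\<^esub> h) = inv\<^bsub>B\<^esub> (\<phi> h)"
proof -
  assume h: "h \<in> H"
  have ih: "inv\<^bsub>A\<^esub> h \<in> H" by (rule subgroup.m_inv_closed[OF H h])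
  have "\<phi> (inv\<^bsub>A\<^esub> h) \<otimes>\<^bsub>B\<^esub> \<phi> h = \<one>\<^bsub>B\<^esub>"
    using phi_mult[OF ih h] phi_one Hc[OF h] by simp
  then show ?thesis using B.inv_equality Kc[OF phi_K[OF h]] Kc[OF phi_K[OF ih]] by simp
qed

lemma coset_transfer:
  assumes N: "subgroup N A" and M: "subgroup M B" and sub: "\<phi> ` (H \<inter> N) \<subseteq> M"
    and h: "h \<in> H" and h': "h' \<in> H" and eq: "N #>\<^bsub>A\<^esub> h = N #>\<^bsub>A\<^esub> h'"
  shows "M #>\<^bsub>B\<^esub> \<phi> h = M #>\<^bsub>B\<^esub> \<phi> h'"
proof -
  have hc: "h \<in> carrier A" and hc': "h' \<in> carrier A" using Hc h h' by auto
  have "h' \<in> N #>\<^bsub>A\<^esub> h" using A.rcos_self[OF hc' N] eq by simp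
  then have n: "h' \<otimes>\<^bsub>A\<^esub> inv\<^bsub>A\<^esub> h \<in> N" using subgroup.rcos_module_imp[OF N A.is_group hc] by simp
  have nh: "h' \<otimes>\<^bsub>A\<^esub> inv\<^bsub>A\<^esub> h \<in> H"
    using subgroup.m_closed[OF H h' subgroup.m_inv_closed[OF H h]] .
  have "\<phi> (h' \<otimes>\<^bsub>A\<^esub> inv\<^bsub>A\<^esub> h) \<in> M" using sub n nh by auto
  moreover have "\<phi> (h' \<otimes>\<^bsub>A\<^esub> inv\<^bsub>A\<^esub> h) = \<phi> h' \<otimes>\<^bsub>B\<^esub> inv\<^bsub>B\<^esub> \<phi> h"
    using phi_mult[OF h' subgroup.m_inv_closed[OF H h]] phi_inv[OF h] by simp
  ultimately have m: "\<phi> h' \<otimes>\<^bsub>B\<^esub> inv\<^bsub>B\<^esub> \<phi> h \<in> M" by simp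
  have pc: "\<phi> h \<in> carrier B" and pc': "\<phi> h' \<in> carrier B" using Kc phi_K h h' by auto
  have "(\<phi> h' \<otimes>\<^bsub>B\<^esub> inv\<^bsub>B\<^esub> \<phi> h) \<otimes>\<^bsub>B\<^esub> \<phi> h \<in> M #>\<^bsub>B\<^esub> \<phi> h"
    using B.rcosI[OF m subgroup.subset[OF M] pc] .
  then have "\<phi> h' \<in> M #>\<^bsub>B\<^esub> \<phi> h" using pc pc' by (simp add: B.m_assoc)
  then show ?thesis using B.repr_independence[OF _ pc M] by simp
qed

lemma coset_reflect:
  assumes N: "subgroup N A" and M: "subgroup M B" and sub: "M \<inter> K \<subseteq> \<phi> ` (H \<inter> N)"
    and h: "h \<in> H" and h': "h' \<in> H" and eq: "M #>\<^bsub>B\<^esub> \<phi> h = M #>\<^bsub>B\<^esub> \<phi> h'"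
  shows "N #>\<^bsub>A\<^esub> h = N #>\<^bsub>A\<^esub> h'"
proof -
  have hc: "h \<in> carrier A" and hc': "h' \<in> carrier A" using Hc h h' by auto
  have pc: "\<phi> h \<in> carrier B" and pc': "\<phi> h' \<in> carrier B" using Kc phi_K h h' by auto
  have "\<phi> h' \<in> M #>\<^bsub>B\<^esub> \<phi> h" using B.rcos_self[OF pc' M] eq by simp
  then have m: "\<phi> h' \<otimes>\<^bsub>B\<^esub> inv\<^bsub>B\<^esub> \<phi> h \<in> M" using subgroup.rcos_module_imp[OF M B.is_group pc] by simp
  have nh: "h' \<otimes>\<^bsub>A\<^esub> inv\<^bsub>A\<^esub> h \<in> H"
    using subgroup.m_closed[OF H h' subgroup.m_inv_closed[OF H h]] .
  have e: "\<phi> (h' \<otimes>\<^bsub>A\<^esub> inv\<^bsub>A\<^esub> h) = \<phi> h' \<otimes>\<^bsub>B\<^esub> inv\<^bsub>B\<^esub> \<phi> h"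
    using phi_mult[OF h' subgroup.m_inv_closed[OF H h]] phi_inv[OF h] by simp
  have "\<phi> (h' \<otimes>\<^bsub>A\<^esub> inv\<^bsub>A\<^esub> h) \<in> M \<inter> K" using m e phi_K[OF nh] by simp
  then have "\<phi> (h' \<otimes>\<^bsub>A\<^esub> inv\<^bsub>A\<^esub> h) \<in> \<phi> ` (H \<inter> N)" by (rule subsetD[OF sub])
  then obtain n where n: "n \<in> H \<inter> N" and en: "\<phi> (h' \<otimes>\<^bsub>A\<^esub> inv\<^bsub>A\<^esub> h) = \<phi> n" by (rule imageE) simp
  have "h' \<otimes>\<^bsub>A\<^esub> inv\<^bsub>A\<^esub> h = n" using inj_onD[OF phi_inj en nh] n by simp
  then have nn: "h' \<otimes>\<^bsub>A\<^esub> inv\<^bsub>A\<^esub> h \<in> N" using n by simp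
  have "(h' \<otimes>\<^bsub>A\<^esub> inv\<^bsub>A\<^esub> h) \<otimes>\<^bsub>A\<^esub> h \<in> N #>\<^bsub>A\<^esub> h"
    using A.rcosI[OF nn subgroup.subset[OF N] hc] .
  then have "h' \<in> N #>\<^bsub>A\<^esub> h" using hc hc' by (simp add: A.m_assoc)
  then show ?thesis using A.repr_independence[OF _ hc N] by simp
qed

end



lemma closed_sep:
  assumes "ERF G" "subgroup S G" "k \<in> carrier G" "k \<notin> S"
  shows "\<exists>F. subgroup F G \<and> S \<subseteq> F \<and> finite (rcosets\<^bsub>G\<^esub> F) \<and> k \<notin> F"
proof -
  have "S = carrier G \<inter> \<Inter>{F. subgroup F G \<and> S \<subseteq> F \<and> finite (rcosets\<^bsub>G\<^esub> F)}"
    using assms(1,2) unfolding ERF_def profinitely_closed_def by simp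
  then have "k \<notin> \<Inter>{F. subgroup F G \<and> S \<subseteq> F \<and> finite (rcosets\<^bsub>G\<^esub> F)}"
    using assms(3,4) by auto
  then show ?thesis by auto
qed

context setting begin

lemma image_subgroup:
  assumes N: "subgroup N A"
  shows "subgroup (\<phi> ` (H \<inter> N)) B"
proof (rule B.subgroupI)
  show "\<phi> ` (H \<inter> N) \<subseteq> carrier B" using phi_K Kc by auto
  have "\<one>\<^bsub>A\<^esub> \<in> H \<inter> N" using subgroup.one_closed[OF H] subgroup.one_closed[OF N] by simp
  then show "\<phi> ` (H \<inter> N) \<noteq> {}" by auto
next
  fix a assume "a \<in> \<phi> ` (H \<inter> N)"
  then obtain n where n: "n \<in> H" "n \<in> N" and a: "a = \<phi> n" by auto
  have "inv\<^bsub>A\<^esub> n \<in> H \<inter> N" using subgroup.m_inv_closed[OF H n(1)] subgroup.m_inv_closed[OF N n(2)] by simp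
  moreover have "inv\<^bsub>B\<^esub> a = \<phi> (inv\<^bsub>A\<^esub> n)" using phi_inv[OF n(1)] a by simp
  ultimately show "inv\<^bsub>B\<^esub> a \<in> \<phi> ` (H \<inter> N)" by simp
next
  fix a b assume "a \<in> \<phi> ` (H \<inter> N)" "b \<in> \<phi> ` (H \<inter> N)"
  then obtain n m where n: "n \<in> H" "n \<in> N" and a: "a = \<phi> n"
    and m: "m \<in> H" "m \<in> N" and b: "b = \<phi> m" by auto
  have "n \<otimes>\<^bsub>A\<^esub> m \<in> H \<inter> N" using subgroup.m_closed[OF H n(1) m(1)] subgroup.m_closed[OF N n(2) m(2)] by simp
  moreover have "a \<otimes>\<^bsub>B\<^esub> b = \<phi> (n \<otimes>\<^bsub>A\<^esub> m)" using phi_mult[OF n(1) m(1)] a b by simp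
  ultimately show "a \<otimes>\<^bsub>B\<^esub> b \<in> \<phi> ` (H \<inter> N)" by simp
qed

lemma central_conj:
  assumes z: "z \<in> K" and x: "x \<in> carrier B"
  shows "x \<otimes>\<^bsub>B\<^esub> z \<otimes>\<^bsub>B\<^esub> inv\<^bsub>B\<^esub> x = z"
proof -
  have zc: "z \<in> carrier B" using Kc[OF z] .
  have "x \<otimes>\<^bsub>B\<^esub> z \<otimes>\<^bsub>B\<^esub> inv\<^bsub>B\<^esub> x = z \<otimes>\<^bsub>B\<^esub> x \<otimes>\<^bsub>B\<^esub> inv\<^bsub>B\<^esub> x"
    using central[OF z x] by simp
  also have "\<dots> = z" using zc x by (simp add: B.m_assoc)
  finally show ?thesis .
qed

lemma exists_M:
  assumes erf: "ERF B" and N: "N \<lhd> A" and finN: "finite (rcosets\<^bsub>A\<^esub> N)"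
    and F: "subgroup F B" and finF: "finite (rcosets\<^bsub>B\<^esub> F)" and KF: "K \<subseteq> F"
  shows "\<exists>M. M \<lhd> B \<and> finite (rcosets\<^bsub>B\<^esub> M) \<and> M \<subseteq> F \<and> M \<inter> K = \<phi> ` (H \<inter> N)"
proof -
  define K' where "K' = \<phi> ` (H \<inter> N)"
  have NA: "subgroup N A" using N by (rule normal_imp_subgroup)
  have sK': "subgroup K' B" unfolding K'_def by (rule image_subgroup[OF NA])
  have K'K: "K' \<subseteq> K" unfolding K'_def using phi_K by auto
  define Q where "Q = (\<lambda>k. K' #>\<^bsub>B\<^esub> k) ` K"
  have Q_eq: "Q = (\<lambda>h. K' #>\<^bsub>B\<^esub> \<phi> h) ` H" unfolding Q_def phi_surj[symmetric] image_image ..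
  have "(\<lambda>h. N #>\<^bsub>A\<^esub> h) ` H \<subseteq> rcosets\<^bsub>A\<^esub> N"
    using A.rcosetsI[OF subgroup.subset[OF NA]] Hc by auto
  then have "finite ((\<lambda>h. N #>\<^bsub>A\<^esub> h) ` H)" using finN by (rule finite_subset)
  then have finQ: "finite Q" unfolding Q_eq
    by (rule finite_image_factor) (rule coset_transfer[OF NA sK' _], auto simp: K'_def)
  have "\<forall>q\<in>Q - {K'}. \<exists>Fq. subgroup Fq B \<and> finite (rcosets\<^bsub>B\<^esub> Fq) \<and> K' \<subseteq> Fq \<and> q \<inter> Fq = {}"
  proof
    fix q assume q: "q \<in> Q - {K'}"
    then obtain k where k: "k \<in> K" and qk: "q = K' #>\<^bsub>B\<^esub> k" unfolding Q_def by auto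
    have kc: "k \<in> carrier B" using Kc[OF k] .
    have "k \<notin> K'"
    proof
      assume "k \<in> K'"
      then have "K' #>\<^bsub>B\<^esub> k = K'" using B.coset_join2[OF kc sK'] by simp
      then show False using q qk by simp
    qed
    then obtain Fq where Fq: "subgroup Fq B" "K' \<subseteq> Fq" "finite (rcosets\<^bsub>B\<^esub> Fq)" "k \<notin> Fq"
      using closed_sep[OF erf sK' kc] by auto
    have "q \<inter> Fq = {}"
    proof (rule ccontr)
      assume "q \<inter> Fq \<noteq> {}"
      then obtain y where y: "y \<in> K' #>\<^bsub>B\<^esub> k" "y \<in> Fq" using qk by auto
      then obtain k' where k': "k' \<in> K'" and yk: "y = k' \<otimes>\<^bsub>B\<^esub> k" unfolding r_coset_def by auto
      have k'c: "k' \<in> carrier B" using k' subgroup.subset[OF sK'] by auto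
      have "inv\<^bsub>B\<^esub> k' \<otimes>\<^bsub>B\<^esub> y \<in> Fq"
        using subgroup.m_closed[OF Fq(1) subgroup.m_inv_closed[OF Fq(1)] y(2)] k' Fq(2) by auto
      moreover have "inv\<^bsub>B\<^esub> k' \<otimes>\<^bsub>B\<^esub> y = k" using yk k'c kc by (simp add: B.cancel1)
      ultimately show False using Fq(4) by simp
    qed
    then show "\<exists>Fq. subgroup Fq B \<and> finite (rcosets\<^bsub>B\<^esub> Fq) \<and> K' \<subseteq> Fq \<and> q \<inter> Fq = {}"
      using Fq by auto
  qed
  then obtain Fs where Fs: "\<forall>q\<in>Q - {K'}. subgroup (Fs q) B \<and> finite (rcosets\<^bsub>B\<^esub> (Fs q)) \<and> K' \<subseteq> Fs q \<and> q \<inter> Fs q = {}"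
    by (rule bchoice[elim_format]) blast
  define S where "S = insert F (Fs ` (Q - {K'}))"
  have finS: "finite S" unfolding S_def using finQ by simp
  have Sprop: "subgroup F' B \<and> finite (rcosets\<^bsub>B\<^esub> F')" if "F' \<in> S" for F'
    using that Fs F finF unfolding S_def by auto
  obtain M where M: "M \<lhd> B" "finite (rcosets\<^bsub>B\<^esub> M)" "\<forall>F'\<in>S. M \<subseteq> F'"
    and Mmax: "\<forall>Z. (\<forall>F'\<in>S. Z \<subseteq> F') \<longrightarrow> Z \<subseteq> carrier B \<longrightarrow>
          (\<forall>z\<in>Z. \<forall>x\<in>carrier B. x \<otimes>\<^bsub>B\<^esub> z \<otimes>\<^bsub>B\<^esub> inv\<^bsub>B\<^esub> x \<in> Z) \<longrightarrow> Z \<subseteq> M"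
    using B.core_exists[OF finS Sprop] by blast
  have MF: "M \<subseteq> F" using M(3) unfolding S_def by simp
  have "K' \<subseteq> M"
  proof -
    have "\<forall>F'\<in>S. K' \<subseteq> F'" using Fs K'K KF unfolding S_def by auto
    moreover have "K' \<subseteq> carrier B" using subgroup.subset[OF sK'] .
    moreover have "\<forall>z\<in>K'. \<forall>x\<in>carrier B. x \<otimes>\<^bsub>B\<^esub> z \<otimes>\<^bsub>B\<^esub> inv\<^bsub>B\<^esub> x \<in> K'"
      using central_conj K'K by auto
    ultimately show ?thesis using Mmax by blast
  qed
  moreover have "M \<inter> K \<subseteq> K'"
  proof
    fix y assume y: "y \<in> M \<inter> K"
    show "y \<in> K'"
    proof (rule ccontr)
      assume ny: "y \<notin> K'"
      define q where "q = K' #>\<^bsub>B\<^esub> y"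
      have yc: "y \<in> carrier B" using y Kc by auto
      have yq: "y \<in> q" unfolding q_def using B.rcos_self[OF yc sK'] .
      have "q \<in> Q - {K'}" using y yq ny unfolding Q_def q_def by auto
      then have "q \<inter> Fs q = {}" "Fs q \<in> S" using Fs unfolding S_def by auto
      moreover have "y \<in> Fs q" using M(3) \<open>Fs q \<in> S\<close> y by auto
      ultimately show False using yq by auto
    qed
  qed
  ultimately have "M \<inter> K = K'" using K'K by auto
  then show ?thesis using M MF unfolding K'_def by auto
qed

end



lemma r_coset_upd: "r_coset (G\<lparr>carrier := Cr\<rparr>) N x = r_coset G N x"
  by (simp add: r_coset_def)
lemma set_mult_upd: "set_mult (G\<lparr>carrier := Cr\<rparr>) C D = set_mult G C D"
  by (simp add: set_mult_def)

context setting begin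

lemma carrier_mod_A:
  assumes N: "N \<lhd> A"
  shows "carrier ((A\<lparr>carrier := H <#>\<^bsub>A\<^esub> N\<rparr>) Mod N) = (\<lambda>h. N #>\<^bsub>A\<^esub> h) ` H"
proof -
  have NA: "subgroup N A" using N by (rule normal_imp_subgroup)
  have "rcosets\<^bsub>A\<lparr>carrier := H <#>\<^bsub>A\<^esub> N\<rparr>\<^esub> N = (\<lambda>x. N #>\<^bsub>A\<^esub> x) ` (H <#>\<^bsub>A\<^esub> N)"
    unfolding RCOSETS_def r_coset_upd by auto
  also have "\<dots> = (\<lambda>h. N #>\<^bsub>A\<^esub> h) ` H"
  proof (intro equalityI subsetI)
    fix C assume "C \<in> (\<lambda>x. N #>\<^bsub>A\<^esub> x) ` (H <#>\<^bsub>A\<^esub> N)"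
    then obtain h n where h: "h \<in> H" and n: "n \<in> N" and C: "C = N #>\<^bsub>A\<^esub> (h \<otimes>\<^bsub>A\<^esub> n)"
      unfolding set_mult_def by auto
    have hc: "h \<in> carrier A" using Hc[OF h] .
    have nc: "n \<in> carrier A" using n subgroup.subset[OF NA] by auto
    have c: "h \<otimes>\<^bsub>A\<^esub> n \<otimes>\<^bsub>A\<^esub> inv\<^bsub>A\<^esub> h \<in> N" using normal.inv_op_closed2[OF N hc n] .
    have "(h \<otimes>\<^bsub>A\<^esub> n \<otimes>\<^bsub>A\<^esub> inv\<^bsub>A\<^esub> h) \<otimes>\<^bsub>A\<^esub> h \<in> N #>\<^bsub>A\<^esub> h"
      using A.rcosI[OF c subgroup.subset[OF NA] hc] .
    then have "h \<otimes>\<^bsub>A\<^esub> n \<in> N #>\<^bsub>A\<^esub> h" using hc nc by (simp add: A.m_assoc)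
    then have "C = N #>\<^bsub>A\<^esub> h" using A.repr_independence[OF _ hc NA] C by simp
    then show "C \<in> (\<lambda>h. N #>\<^bsub>A\<^esub> h) ` H" using h by simp
  next
    fix C assume "C \<in> (\<lambda>h. N #>\<^bsub>A\<^esub> h) ` H"
    then obtain h where h: "h \<in> H" and C: "C = N #>\<^bsub>A\<^esub> h" by auto
    have "h \<otimes>\<^bsub>A\<^esub> \<one>\<^bsub>A\<^esub> \<in> H <#>\<^bsub>A\<^esub> N"
      unfolding set_mult_def using h subgroup.one_closed[OF NA] by auto
    then show "C \<in> (\<lambda>x. N #>\<^bsub>A\<^esub> x) ` (H <#>\<^bsub>A\<^esub> N)" using C Hc[OF h] by (auto intro: image_eqI)
  qed
  finally show ?thesis unfolding FactGroup_def by simp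
qed

lemma carrier_mod_B:
  assumes M: "M \<lhd> B"
  shows "carrier ((B\<lparr>carrier := K <#>\<^bsub>B\<^esub> M\<rparr>) Mod M) = (\<lambda>k. M #>\<^bsub>B\<^esub> k) ` K"
proof -
  have MB: "subgroup M B" using M by (rule normal_imp_subgroup)
  have "rcosets\<^bsub>B\<lparr>carrier := K <#>\<^bsub>B\<^esub> M\<rparr>\<^esub> M = (\<lambda>x. M #>\<^bsub>B\<^esub> x) ` (K <#>\<^bsub>B\<^esub> M)"
    unfolding RCOSETS_def r_coset_upd by auto
  also have "\<dots> = (\<lambda>k. M #>\<^bsub>B\<^esub> k) ` K"
  proof (intro equalityI subsetI)
    fix C assume "C \<in> (\<lambda>x. M #>\<^bsub>B\<^esub> x) ` (K <#>\<^bsub>B\<^esub> M)"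
    then obtain k m where k: "k \<in> K" and m: "m \<in> M" and C: "C = M #>\<^bsub>B\<^esub> (k \<otimes>\<^bsub>B\<^esub> m)"
      unfolding set_mult_def by auto
    have kc: "k \<in> carrier B" using Kc[OF k] .
    have mc: "m \<in> carrier B" using m subgroup.subset[OF MB] by auto
    have "m \<otimes>\<^bsub>B\<^esub> k \<in> M #>\<^bsub>B\<^esub> k"
      using B.rcosI[OF m subgroup.subset[OF MB] kc] .
    then have "k \<otimes>\<^bsub>B\<^esub> m \<in> M #>\<^bsub>B\<^esub> k" using central[OF k mc] by simp
    then have "C = M #>\<^bsub>B\<^esub> k" using B.repr_independence[OF _ kc MB] C by simp
    then show "C \<in> (\<lambda>k. M #>\<^bsub>B\<^esub> k) ` K" using k by simp
  next
    fix C assume "C \<in> (\<lambda>k. M #>\<^bsub>B\<^esub> k) ` K"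
    then obtain k where k: "k \<in> K" and C: "C = M #>\<^bsub>B\<^esub> k" by auto
    have "k \<otimes>\<^bsub>B\<^esub> \<one>\<^bsub>B\<^esub> \<in> K <#>\<^bsub>B\<^esub> M"
      unfolding set_mult_def using k subgroup.one_closed[OF MB] by auto
    then show "C \<in> (\<lambda>x. M #>\<^bsub>B\<^esub> x) ` (K <#>\<^bsub>B\<^esub> M)" using C Kc[OF k] by (auto intro: image_eqI)
  qed
  finally show ?thesis unfolding FactGroup_def by simp
qed

lemma induced_map_eq:
  assumes N: "subgroup N A" and M: "subgroup M B" and sub: "\<phi> ` (H \<inter> N) \<subseteq> M" and h: "h \<in> H"
  shows "induced_map A B H \<phi> N M (N #>\<^bsub>A\<^esub> h) = M #>\<^bsub>B\<^esub> \<phi> h"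
proof -
  let ?P = "\<lambda>D. \<exists>h'\<in>H. N #>\<^bsub>A\<^esub> h = N #>\<^bsub>A\<^esub> h' \<and> D = M #>\<^bsub>B\<^esub> \<phi> h'"
  have "?P (M #>\<^bsub>B\<^esub> \<phi> h)" using h by blast
  then have "?P (SOME D. ?P D)" by (rule someI)
  then obtain h' where h': "h' \<in> H" "N #>\<^bsub>A\<^esub> h = N #>\<^bsub>A\<^esub> h'" and D: "(SOME D. ?P D) = M #>\<^bsub>B\<^esub> \<phi> h'"
    by blast
  have "M #>\<^bsub>B\<^esub> \<phi> h = M #>\<^bsub>B\<^esub> \<phi> h'" by (rule coset_transfer[OF N M sub h h'(1) h'(2)])
  then show ?thesis unfolding induced_map_def using D by simp
qed

lemma compat_pair:
  assumes N: "N \<lhd> A" and M: "M \<lhd> B" and MK: "M \<inter> K = \<phi> ` (H \<inter> N)"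
  shows "(\<forall>h\<in>H. \<forall>h'\<in>H. N #>\<^bsub>A\<^esub> h = N #>\<^bsub>A\<^esub> h' \<longrightarrow> M #>\<^bsub>B\<^esub> \<phi> h = M #>\<^bsub>B\<^esub> \<phi> h') \<and>
     induced_map A B H \<phi> N M \<in> iso ((A\<lparr>carrier := H <#>\<^bsub>A\<^esub> N\<rparr>) Mod N) ((B\<lparr>carrier := K <#>\<^bsub>B\<^esub> M\<rparr>) Mod M)"
proof -
  have NA: "subgroup N A" using N by (rule normal_imp_subgroup)
  have MB: "subgroup M B" using M by (rule normal_imp_subgroup)
  have sub: "\<phi> ` (H \<inter> N) \<subseteq> M" using MK by auto
  have sub2: "M \<inter> K \<subseteq> \<phi> ` (H \<inter> N)" using MK by auto
  let ?f = "induced_map A B H \<phi> N M"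
  have WD: "\<forall>h\<in>H. \<forall>h'\<in>H. N #>\<^bsub>A\<^esub> h = N #>\<^bsub>A\<^esub> h' \<longrightarrow> M #>\<^bsub>B\<^esub> \<phi> h = M #>\<^bsub>B\<^esub> \<phi> h'"
  proof (intro ballI impI)
    fix h h' assume "h \<in> H" "h' \<in> H" "N #>\<^bsub>A\<^esub> h = N #>\<^bsub>A\<^esub> h'"
    then show "M #>\<^bsub>B\<^esub> \<phi> h = M #>\<^bsub>B\<^esub> \<phi> h'" by (rule coset_transfer[OF NA MB sub])
  qed
  have fe: "?f (N #>\<^bsub>A\<^esub> h) = M #>\<^bsub>B\<^esub> \<phi> h" if "h \<in> H" for h
    by (rule induced_map_eq[OF NA MB sub that])
  have cA: "carrier ((A\<lparr>carrier := H <#>\<^bsub>A\<^esub> N\<rparr>) Mod N) = (\<lambda>h. N #>\<^bsub>A\<^esub> h) ` H"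
    by (rule carrier_mod_A[OF N])
  have cB: "carrier ((B\<lparr>carrier := K <#>\<^bsub>B\<^esub> M\<rparr>) Mod M) = (\<lambda>h. M #>\<^bsub>B\<^esub> \<phi> h) ` H"
  proof -
    have "(\<lambda>k. M #>\<^bsub>B\<^esub> k) ` K = (\<lambda>h. M #>\<^bsub>B\<^esub> \<phi> h) ` H"
      unfolding phi_surj[symmetric] image_image ..
    then show ?thesis using carrier_mod_B[OF M] by simp
  qed
  have hom: "?f \<in> hom ((A\<lparr>carrier := H <#>\<^bsub>A\<^esub> N\<rparr>) Mod N) ((B\<lparr>carrier := K <#>\<^bsub>B\<^esub> M\<rparr>) Mod M)"
    unfolding hom_def
  proof (intro CollectI conjI)
    show "?f \<in> carrier ((A\<lparr>carrier := H <#>\<^bsub>A\<^esub> N\<rparr>) Mod N) \<rightarrow> carrier ((B\<lparr>carrier := K <#>\<^bsub>B\<^esub> M\<rparr>) Mod M)"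
      unfolding cA cB using fe by auto
    show "\<forall>x\<in>carrier ((A\<lparr>carrier := H <#>\<^bsub>A\<^esub> N\<rparr>) Mod N). \<forall>y\<in>carrier ((A\<lparr>carrier := H <#>\<^bsub>A\<^esub> N\<rparr>) Mod N).
        ?f (x \<otimes>\<^bsub>(A\<lparr>carrier := H <#>\<^bsub>A\<^esub> N\<rparr>) Mod N\<^esub> y) = ?f x \<otimes>\<^bsub>(B\<lparr>carrier := K <#>\<^bsub>B\<^esub> M\<rparr>) Mod M\<^esub> ?f y"
      unfolding cA
    proof (intro ballI)
      fix x y assume "x \<in> (\<lambda>h. N #>\<^bsub>A\<^esub> h) ` H" "y \<in> (\<lambda>h. N #>\<^bsub>A\<^esub> h) ` H"
      then obtain h1 h2 where h1: "h1 \<in> H" and x: "x = N #>\<^bsub>A\<^esub> h1" and h2: "h2 \<in> H" and y: "y = N #>\<^bsub>A\<^esub> h2"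
        by auto
      have h12: "h1 \<otimes>\<^bsub>A\<^esub> h2 \<in> H" using subgroup.m_closed[OF H h1 h2] .
      have "x \<otimes>\<^bsub>(A\<lparr>carrier := H <#>\<^bsub>A\<^esub> N\<rparr>) Mod N\<^esub> y = N #>\<^bsub>A\<^esub> (h1 \<otimes>\<^bsub>A\<^esub> h2)"
        unfolding FactGroup_def using x y normal.rcos_sum[OF N Hc[OF h1] Hc[OF h2]] by (simp add: set_mult_upd)
      then have "?f (x \<otimes>\<^bsub>(A\<lparr>carrier := H <#>\<^bsub>A\<^esub> N\<rparr>) Mod N\<^esub> y) = M #>\<^bsub>B\<^esub> (\<phi> h1 \<otimes>\<^bsub>B\<^esub> \<phi> h2)"
        using fe[OF h12] phi_mult[OF h1 h2] by simp
      also have "\<dots> = (M #>\<^bsub>B\<^esub> \<phi> h1) <#>\<^bsub>B\<^esub> (M #>\<^bsub>B\<^esub> \<phi> h2)"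
        using normal.rcos_sum[OF M Kc[OF phi_K[OF h1]] Kc[OF phi_K[OF h2]]] by simp
      also have "\<dots> = ?f x \<otimes>\<^bsub>(B\<lparr>carrier := K <#>\<^bsub>B\<^esub> M\<rparr>) Mod M\<^esub> ?f y"
        unfolding FactGroup_def using fe[OF h1] fe[OF h2] x y by (simp add: set_mult_upd)
      finally show "?f (x \<otimes>\<^bsub>(A\<lparr>carrier := H <#>\<^bsub>A\<^esub> N\<rparr>) Mod N\<^esub> y) = ?f x \<otimes>\<^bsub>(B\<lparr>carrier := K <#>\<^bsub>B\<^esub> M\<rparr>) Mod M\<^esub> ?f y" .
    qed
  qed
  have inj: "inj_on ?f ((\<lambda>h. N #>\<^bsub>A\<^esub> h) ` H)"
  proof (rule inj_onI)
    fix x y assume "x \<in> (\<lambda>h. N #>\<^bsub>A\<^esub> h) ` H" "y \<in> (\<lambda>h. N #>\<^bsub>A\<^esub> h) ` H" and eq: "?f x = ?f y"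
    then obtain h1 h2 where h1: "h1 \<in> H" and x: "x = N #>\<^bsub>A\<^esub> h1" and h2: "h2 \<in> H" and y: "y = N #>\<^bsub>A\<^esub> h2"
      by auto
    have "M #>\<^bsub>B\<^esub> \<phi> h1 = M #>\<^bsub>B\<^esub> \<phi> h2" using eq fe[OF h1] fe[OF h2] x y by simp
    then show "x = y" using coset_reflect[OF NA MB sub2 h1 h2] x y by simp
  qed
  have img: "?f ` ((\<lambda>h. N #>\<^bsub>A\<^esub> h) ` H) = (\<lambda>h. M #>\<^bsub>B\<^esub> \<phi> h) ` H"
    unfolding image_image using fe by simp
  have "bij_betw ?f (carrier ((A\<lparr>carrier := H <#>\<^bsub>A\<^esub> N\<rparr>) Mod N)) (carrier ((B\<lparr>carrier := K <#>\<^bsub>B\<^esub> M\<rparr>) Mod M))"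
    unfolding bij_betw_def cA cB using inj img by simp
  with hom have "?f \<in> iso ((A\<lparr>carrier := H <#>\<^bsub>A\<^esub> N\<rparr>) Mod N) ((B\<lparr>carrier := K <#>\<^bsub>B\<^esub> M\<rparr>) Mod M)"
    unfolding iso_def by simp
  with WD show ?thesis by (rule conjI)
qed

end



lemma (in group) finite_rcosets_self: "finite (rcosets (carrier G))"
proof -
  have "rcosets (carrier G) \<subseteq> {carrier G}"
  proof
    fix C assume "C \<in> rcosets (carrier G)"
    then obtain x where x: "x \<in> carrier G" and C: "C = carrier G #> x" unfolding RCOSETS_def by auto
    have "carrier G #> x = carrier G" by (rule coset_join2[OF x subgroup_self x])
    then show "C \<in> {carrier G}" using C by simp
  qed
  then show ?thesis by (rule finite_subset) simp
qed

theorem theorem3p7: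
  fixes A :: "('a, 'm) monoid_scheme" and B :: "('b, 'n) monoid_scheme"
    and H :: "'a set" and K :: "'b set" and \<phi> :: "'a \<Rightarrow> 'b"
  assumes "group A" and "subgroup H A"
    and "\<exists>(I :: 'c set) N. H_filtration A H I N"
    and "group B" and "ERF B" and "central_subgroup K B"
    and "\<phi> \<in> iso (A\<lparr>carrier := H\<rparr>) (B\<lparr>carrier := K\<rparr>)"
  shows "\<exists>(I :: ('a set \<times> 'b set) set) N M.
           H_filtration A H I N \<and> H_filtration B K I M \<and> compatible A B H K \<phi> I N M"
proof -
  have st: "setting A B H K \<phi>"
  proof (intro setting.intro setting_axioms.intro)
    show "group A" "group B" "subgroup H A" "\<phi> \<in> iso (A\<lparr>carrier := H\<rparr>) (B\<lparr>carrier := K\<rparr>)"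
      by (fact assms(1), fact assms(4), fact assms(2), fact assms(7))
    show "subgroup K B" using assms(6) unfolding central_subgroup_def by (rule conjunct1)
    fix k g assume kg: "k \<in> K" "g \<in> carrier B"
    have "\<forall>k\<in>K. \<forall>g\<in>carrier B. k \<otimes>\<^bsub>B\<^esub> g = g \<otimes>\<^bsub>B\<^esub> k"
      using assms(6) unfolding central_subgroup_def by (rule conjunct2)
    then show "k \<otimes>\<^bsub>B\<^esub> g = g \<otimes>\<^bsub>B\<^esub> k" using kg by blast
  qed
  interpret setting A B H K \<phi> by (rule st)
  have erf: "ERF B" by fact
  obtain I0 :: "'c set" and N0 where filt: "H_filtration A H I0 N0" using assms(3) by blast
  have N0n: "N0 l \<lhd> A" and N0f: "finite (rcosets\<^bsub>A\<^esub> (N0 l))" if "l \<in> I0" for l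
    using filt that unfolding H_filtration_def filtration_def by auto
  have N0int: "carrier A \<inter> (\<Inter>l\<in>I0. N0 l) = {\<one>\<^bsub>A\<^esub>}"
    using filt unfolding H_filtration_def filtration_def by simp
  have N0H: "carrier A \<inter> (\<Inter>l\<in>I0. H <#>\<^bsub>A\<^esub> N0 l) = H"
    using filt unfolding H_filtration_def by simp
  define P where "P = {(N, M). N \<lhd> A \<and> finite (rcosets\<^bsub>A\<^esub> N) \<and> M \<lhd> B \<and> finite (rcosets\<^bsub>B\<^esub> M)
       \<and> M \<inter> K = \<phi> ` (H \<inter> N)}"
  have KcB: "K \<subseteq> carrier B" using subgroup.subset[OF K] .
  have exA: "\<exists>M. (N0 l, M) \<in> P" if l: "l \<in> I0" for l
  proof -
    obtain M where "M \<lhd> B" "finite (rcosets\<^bsub>B\<^esub> M)" "M \<inter> K = \<phi> ` (H \<inter> N0 l)"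
      using exists_M[OF erf N0n[OF l] N0f[OF l] B.subgroup_self B.finite_rcosets_self KcB] by blast
    then show ?thesis unfolding P_def using N0n[OF l] N0f[OF l] by blast
  qed
  have exB: "\<exists>M. (carrier A, M) \<in> P \<and> b \<notin> M \<and> b \<notin> K <#>\<^bsub>B\<^esub> M"
    if b: "b \<in> carrier B" "b \<notin> K" for b
  proof -
    obtain F where F: "subgroup F B" "K \<subseteq> F" "finite (rcosets\<^bsub>B\<^esub> F)" "b \<notin> F"
      using closed_sep[OF erf K b] by blast
    obtain M where M: "M \<lhd> B" "finite (rcosets\<^bsub>B\<^esub> M)" "M \<subseteq> F" "M \<inter> K = \<phi> ` (H \<inter> carrier A)"
      using exists_M[OF erf A.normal_self A.finite_rcosets_self F(1) F(3) F(2)] by blast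
    have "K <#>\<^bsub>B\<^esub> M \<subseteq> F" by (rule B.subgroup_mult_sub[OF F(1) F(2) M(3)])
    then show ?thesis unfolding P_def using M F(4) A.normal_self A.finite_rcosets_self by blast
  qed
  have exK: "\<exists>i\<in>P. b \<notin> snd i" if b: "b \<in> K" "b \<noteq> \<one>\<^bsub>B\<^esub>" for b
  proof -
    obtain h where h: "h \<in> H" and bh: "b = \<phi> h" using b(1) phi_surj by auto
    have "h \<noteq> \<one>\<^bsub>A\<^esub>" using b(2) bh phi_one by auto
    then have "h \<notin> carrier A \<inter> (\<Inter>l\<in>I0. N0 l)" using N0int by auto
    then obtain l where l: "l \<in> I0" and hl: "h \<notin> N0 l" using Hc[OF h] by auto
    obtain M where PM: "(N0 l, M) \<in> P" using exA[OF l] by blast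
    have "b \<notin> M"
    proof
      assume "b \<in> M"
      then have "b \<in> \<phi> ` (H \<inter> N0 l)" using PM b(1) unfolding P_def by auto
      then obtain n where n: "n \<in> H" "n \<in> N0 l" and bn: "b = \<phi> n" by auto
      have "h = n" using inj_onD[OF phi_inj _ h n(1)] bh bn by simp
      then show False using hl n by simp
    qed
    then show ?thesis using PM by force
  qed
  have HfA: "H_filtration A H P fst"
    unfolding H_filtration_def filtration_def
  proof (intro conjI ballI)
    fix i assume "i \<in> P"
    then show "fst i \<lhd> A" "finite (rcosets\<^bsub>A\<^esub> fst i)" unfolding P_def by auto
  next
    show "carrier A \<inter> (\<Inter>i\<in>P. fst i) = {\<one>\<^bsub>A\<^esub>}"
    proof (intro equalityI subsetI)
      fix x assume x: "x \<in> carrier A \<inter> (\<Inter>i\<in>P. fst i)"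
      have "x \<in> N0 l" if l: "l \<in> I0" for l
      proof -
        obtain M where "(N0 l, M) \<in> P" using exA[OF l] by blast
        then show ?thesis using x by force
      qed
      then have "x \<in> carrier A \<inter> (\<Inter>l\<in>I0. N0 l)" using x by auto
      then show "x \<in> {\<one>\<^bsub>A\<^esub>}" using N0int by simp
    next
      fix x assume "x \<in> {\<one>\<^bsub>A\<^esub>}"
      moreover have "\<one>\<^bsub>A\<^esub> \<in> fst i" if "i \<in> P" for i
        using that subgroup.one_closed[OF normal_imp_subgroup] unfolding P_def by auto
      ultimately show "x \<in> carrier A \<inter> (\<Inter>i\<in>P. fst i)" by auto
    qed
  next
    show "carrier A \<inter> (\<Inter>i\<in>P. H <#>\<^bsub>A\<^esub> fst i) = H"
    proof (intro equalityI subsetI)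
      fix x assume x: "x \<in> carrier A \<inter> (\<Inter>i\<in>P. H <#>\<^bsub>A\<^esub> fst i)"
      have "x \<in> H <#>\<^bsub>A\<^esub> N0 l" if l: "l \<in> I0" for l
      proof -
        obtain M where "(N0 l, M) \<in> P" using exA[OF l] by blast
        then show ?thesis using x by force
      qed
      then have "x \<in> carrier A \<inter> (\<Inter>l\<in>I0. H <#>\<^bsub>A\<^esub> N0 l)" using x by auto
      then show "x \<in> H" using N0H by simp
    next
      fix x assume x: "x \<in> H"
      have "x \<in> H <#>\<^bsub>A\<^esub> fst i" if "i \<in> P" for i
      proof -
        have "subgroup (fst i) A" using that normal_imp_subgroup unfolding P_def by auto
        then have "\<one>\<^bsub>A\<^esub> \<in> fst i" by (rule subgroup.one_closed)
        then have "x \<otimes>\<^bsub>A\<^esub> \<one>\<^bsub>A\<^esub> \<in> H <#>\<^bsub>A\<^esub> fst i" using x unfolding set_mult_def by auto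
        then show ?thesis using Hc[OF x] by simp
      qed
      then show "x \<in> carrier A \<inter> (\<Inter>i\<in>P. H <#>\<^bsub>A\<^esub> fst i)" using Hc[OF x] by auto
    qed
  qed
  have HfB: "H_filtration B K P snd"
    unfolding H_filtration_def filtration_def
  proof (intro conjI ballI)
    fix i assume "i \<in> P"
    then show "snd i \<lhd> B" "finite (rcosets\<^bsub>B\<^esub> snd i)" unfolding P_def by auto
  next
    show "carrier B \<inter> (\<Inter>i\<in>P. snd i) = {\<one>\<^bsub>B\<^esub>}"
    proof (intro equalityI subsetI)
      fix x assume x: "x \<in> carrier B \<inter> (\<Inter>i\<in>P. snd i)"
      show "x \<in> {\<one>\<^bsub>B\<^esub>}"
      proof (rule ccontr)
        assume nx: "x \<notin> {\<one>\<^bsub>B\<^esub>}"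
        show False
        proof (cases "x \<in> K")
          case True
          have "x \<noteq> \<one>\<^bsub>B\<^esub>" using nx by simp
          then have "\<exists>i\<in>P. x \<notin> snd i" using exK[OF True] by simp
          then obtain i where "i \<in> P" "x \<notin> snd i" by (rule bexE)
          then show False using x by auto
        next
          case False
          then obtain M where "(carrier A, M) \<in> P" "x \<notin> M" using exB x by blast
          then show False using x by force
        qed
      qed
    next
      fix x assume "x \<in> {\<one>\<^bsub>B\<^esub>}"
      moreover have "\<one>\<^bsub>B\<^esub> \<in> snd i" if "i \<in> P" for i
        using that subgroup.one_closed[OF normal_imp_subgroup] unfolding P_def by auto
      ultimately show "x \<in> carrier B \<inter> (\<Inter>i\<in>P. snd i)" by auto
    qed
  next
    show "carrier B \<inter> (\<Inter>i\<in>P. K <#>\<^bsub>B\<^esub> snd i) = K"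
    proof (intro equalityI subsetI)
      fix x assume x: "x \<in> carrier B \<inter> (\<Inter>i\<in>P. K <#>\<^bsub>B\<^esub> snd i)"
      show "x \<in> K"
      proof (rule ccontr)
        assume "x \<notin> K"
        then obtain M where "(carrier A, M) \<in> P" "x \<notin> K <#>\<^bsub>B\<^esub> M" using exB x by blast
        then show False using x by force
      qed
    next
      fix x assume x: "x \<in> K"
      have "x \<in> K <#>\<^bsub>B\<^esub> snd i" if "i \<in> P" for i
      proof -
        have "subgroup (snd i) B" using that normal_imp_subgroup unfolding P_def by auto
        then have "\<one>\<^bsub>B\<^esub> \<in> snd i" by (rule subgroup.one_closed)
        then have "x \<otimes>\<^bsub>B\<^esub> \<one>\<^bsub>B\<^esub> \<in> K <#>\<^bsub>B\<^esub> snd i" using x unfolding set_mult_def by auto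
        then show ?thesis using Kc[OF x] by simp
      qed
      then show "x \<in> carrier B \<inter> (\<Inter>i\<in>P. K <#>\<^bsub>B\<^esub> snd i)" using Kc[OF x] by auto
    qed
  qed
  have comp: "compatible A B H K \<phi> P fst snd"
    unfolding compatible_def
  proof
    fix i assume "i \<in> P"
    then obtain N M where i: "i = (N, M)" and "N \<lhd> A" "M \<lhd> B" "M \<inter> K = \<phi> ` (H \<inter> N)"
      unfolding P_def by blast
    then have "fst i \<lhd> A" "snd i \<lhd> B" "snd i \<inter> K = \<phi> ` (H \<inter> fst i)" by simp_all
    then show "(\<forall>h\<in>H. \<forall>h'\<in>H. fst i #>\<^bsub>A\<^esub> h = fst i #>\<^bsub>A\<^esub> h' \<longrightarrow> snd i #>\<^bsub>B\<^esub> \<phi> h = snd i #>\<^bsub>B\<^esub> \<phi> h') \<and>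
        induced_map A B H \<phi> (fst i) (snd i)
          \<in> iso ((A\<lparr>carrier := H <#>\<^bsub>A\<^esub> fst i\<rparr>) Mod (fst i))
                ((B\<lparr>carrier := K <#>\<^bsub>B\<^esub> snd i\<rparr>) Mod (snd i))"
      by (rule compat_pair)
  qed
  show ?thesis using HfA HfB comp by blast
qed


end
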